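(* If $f, g : X \to \mathbb{R}$ are limsup functions, then $f+g$, $\min(f,g)$ and $\max(f,g)$ are limsup functions.
   Context: Let $A$ be a non-empty countable set and $T$ a pruned tree on $A$ (a set of finite sequences of elements of $A$, closed under initial segments, in which every sequence has a proper extension in $T$). Let $X$ be the set of infinite branches of $T$, with the topology generated by the cylinder sets $O(s) = \{x \in X : s \text{ is an initial segment of } x\}$, $s \in T$. A function $f : X \to \mathbb{R}$ is a limsup function if there exists $u : T \to \mathbb{R}$ with $f(x) = \limsup_{t\to\infty} u(x_0,\dots,x_t)$ for every $x \in X$. *)

theory Defs
  imports "HOL-Analysis.Analysis" "HOL-Library.Liminf_Limsup"
begin

definition pruned_tree :: "'a set \<Rightarrow> 'a list set \<Rightarrow> bool" where
  "pruned_tree A T \<longleftrightarrow>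
     T \<subseteq> lists A
   \<and> (\<forall>s\<in>T. \<forall>n. take n s \<in> T)
   \<and> (\<forall>s\<in>T. \<exists>t\<in>T. length s < length t \<and> take (length s) t = s)"

definition branches :: "'a list set \<Rightarrow> (nat \<Rightarrow> 'a) set" where
  "branches T = {x. \<forall>n. map x [0..<n] \<in> T}"

definition limsup_function :: "'a list set \<Rightarrow> ((nat \<Rightarrow> 'a) \<Rightarrow> real) \<Rightarrow> bool" where
  "limsup_function T f \<longleftrightarrow>
     (\<exists>u :: 'a list \<Rightarrow> real. \<forall>x\<in>branches T.
        ereal (f x) = limsup (\<lambda>t. ereal (u (map x [0..<Suc t]))))"

end

theory Submission
  imports Defs
begin

definition lev :: "(nat \<Rightarrow> real \<Rightarrow> 'a list \<Rightarrow> bool) \<Rightarrow> real \<Rightarrow> 'a list \<Rightarrow> nat" where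
  "lev R q s = (LEAST i. i = length s \<or> \<not> R i q s)"

definition qq :: "nat \<Rightarrow> real" where "qq j = real_of_rat (from_nat j)"

definition evt :: "(nat \<Rightarrow> real \<Rightarrow> 'a list \<Rightarrow> bool) \<Rightarrow> nat \<Rightarrow> 'a list \<Rightarrow> bool" where
  "evt R j s \<longleftrightarrow> s \<noteq> [] \<and> j \<le> length s \<and> lev R (qq j) (butlast s) < lev R (qq j) s \<and> j \<le> lev R (qq j) s"

definition ww :: "(nat \<Rightarrow> real \<Rightarrow> 'a list \<Rightarrow> bool) \<Rightarrow> 'a list \<Rightarrow> real" where
  "ww R s = Max (insert (- real (length s)) (qq ` {j. j \<le> length s \<and> evt R j s}))"

lemma qq_dense: "a < b \<Longrightarrow> \<exists>j. a < qq j \<and> qq j < b"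
proof -
  assume "a < b"
  then obtain r where "r \<in> \<rat>" "a < r" "r < b" using Rats_dense_in_real by blast
  then obtain p where p: "r = real_of_rat p" by (auto simp: Rats_def)
  have "from_nat (to_nat p) = p" by simp
  thus ?thesis using p \<open>a<r\<close> \<open>r<b\<close> unfolding qq_def by metis
qed

lemma butlast_map_upt: "butlast (map x [0..<Suc t]) = map x [0..<t]"
  by simp

lemma lev_cases: "lev R q s = length s \<or> \<not> R (lev R q s) q s"
  unfolding lev_def by (rule LeastI[where k="length s"]) simp

lemma lev_le: "lev R q s \<le> length s"
  unfolding lev_def by (rule Least_le) simp

lemma lev_le_i: "\<not> R i q s \<Longrightarrow> lev R q s \<le> i"
  unfolding lev_def by (rule Least_le) simp

lemma lev_ge: assumes "\<And>i. i < N \<Longrightarrow> R i q s" "N \<le> length s" shows "N \<le> lev R q s"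
proof (rule ccontr)
  assume "\<not> N \<le> lev R q s"
  thus False using lev_cases[of R q s] assms by force
qed

locale conv =
  fixes R :: "nat \<Rightarrow> real \<Rightarrow> 'a list \<Rightarrow> bool" and B :: "(nat \<Rightarrow> 'a) set" and f :: "(nat \<Rightarrow> 'a) \<Rightarrow> real"
  assumes mono_r: "\<And>i r r' s. R i r s \<Longrightarrow> r' \<le> r \<Longrightarrow> R i r' s"
  and mono_s: "\<And>i r x t t'. x \<in> B \<Longrightarrow> R i r (map x [0..<t]) \<Longrightarrow> t \<le> t' \<Longrightarrow> R i r (map x [0..<t'])"
  and H1: "\<And>x i r. x \<in> B \<Longrightarrow> r < f x \<Longrightarrow> \<exists>t. R i r (map x [0..<t])"
  and H2: "\<And>x c. x \<in> B \<Longrightarrow> f x < c \<Longrightarrow> \<exists>i. \<forall>t. \<not> R i c (map x [0..<t])"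
begin

lemma L_mono: assumes "x \<in> B" shows "lev R q (map x [0..<t]) \<le> lev R q (map x [0..<Suc t])"
proof (cases "lev R q (map x [0..<Suc t]) = Suc t")
  case True then show ?thesis using lev_le[of R q "map x [0..<t]"] by simp
next
  case False
  let ?k = "lev R q (map x [0..<Suc t])"
  have "?k = Suc t \<or> \<not> R ?k q (map x [0..<Suc t])"
    using lev_cases[of R q "map x [0..<Suc t]"] by simp
  with False have "\<not> R ?k q (map x [0..<Suc t])" by simp
  hence "\<not> R ?k q (map x [0..<t])" using mono_s[OF assms, of ?k q t "Suc t"] by auto
  thus ?thesis by (rule lev_le_i)
qed

lemma L_mono': assumes "x \<in> B" "t \<le> t'" shows "lev R q (map x [0..<t]) \<le> lev R q (map x [0..<t'])"
  using lift_Suc_mono_le[of "\<lambda>t. lev R q (map x [0..<t])", OF L_mono[OF assms(1)] assms(2)] .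

lemma all_R: assumes "x \<in> B" "q < f x" shows "\<exists>t. \<forall>i<N. R i q (map x [0..<t])"
proof (induction N)
  case 0 then show ?case by simp
next
  case (Suc N)
  then obtain t where t: "\<forall>i<N. R i q (map x [0..<t])" by blast
  obtain t' where t': "R N q (map x [0..<t'])" using H1[OF assms] by blast
  have "\<forall>i<Suc N. R i q (map x [0..<max t t'])"
    using t t' mono_s[OF assms(1)] by (metis less_Suc_eq max.cobounded1 max.cobounded2)
  then show ?case by blast
qed

lemma L_unbounded: assumes "x \<in> B" "q < f x" shows "\<exists>t. N \<le> lev R q (map x [0..<t])"
proof -
  obtain t where t: "\<forall>i<N. R i q (map x [0..<t])" using all_R[OF assms] by blast
  have "\<forall>i<N. R i q (map x [0..<max t N])" using t mono_s[OF assms(1)] by (meson max.cobounded1)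
  hence "N \<le> lev R q (map x [0..<max t N])" by (intro lev_ge) auto
  thus ?thesis by blast
qed

lemma lower: assumes "x \<in> B" "qq j < f x"
  shows "\<exists>t\<ge>T0. qq j \<le> ww R (map x [0..<Suc t])"
proof -
  define L where "L t = lev R (qq j) (map x [0..<t])" for t
  define N where "N = max j (Suc (L T0))"
  obtain t' where t': "N \<le> L t'" using L_unbounded[OF assms] unfolding L_def by blast
  have "T0 \<le> t'"
  proof (rule ccontr)
    assume "\<not> T0 \<le> t'"
    hence "L t' \<le> L T0" unfolding L_def using L_mono'[OF assms(1)] by simp
    with t' show False unfolding N_def by simp
  qed
  define t'' where "t'' = (LEAST t. T0 \<le> t \<and> N \<le> L t)"
  have t''1: "T0 \<le> t'' \<and> N \<le> L t''" unfolding t''_def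
    by (rule LeastI[where k=t']) (use t' \<open>T0 \<le> t'\<close> in simp)
  have t''2: "\<And>t. t < t'' \<Longrightarrow> \<not> (T0 \<le> t \<and> N \<le> L t)"
    unfolding t''_def using not_less_Least by blast
  have "t'' \<noteq> T0" using t''1 unfolding N_def by auto
  then obtain t where tt: "t'' = Suc t" using t''1 by (cases t'') auto
  have "T0 \<le> t" using t''1 tt \<open>t'' \<noteq> T0\<close> by simp
  hence Lt: "L t < N" using t''2[of t] tt by simp
  have "L (Suc t) \<le> Suc t" unfolding L_def using lev_le[of R "qq j" "map x [0..<Suc t]"] by simp
  have inc: "L t < L (Suc t)" using Lt t''1 tt by simp
  have ev: "evt R j (map x [0..<Suc t])"
    unfolding evt_def using t''1 tt inc \<open>L (Suc t) \<le> Suc t\<close> unfolding L_def N_def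
    by (simp only: butlast_map_upt) simp
  have "qq j \<in> insert (- real (length (map x [0..<Suc t]))) (qq ` {j. j \<le> length (map x [0..<Suc t]) \<and> evt R j (map x [0..<Suc t])})"
    using ev unfolding evt_def by auto
  hence "qq j \<le> ww R (map x [0..<Suc t])" unfolding ww_def by (intro Max_ge) auto
  thus ?thesis using \<open>T0 \<le> t\<close> by blast
qed

end

lemma ev_const: fixes g :: "nat \<Rightarrow> nat"
  assumes "\<And>t. g t \<le> g (Suc t)" "\<And>t. g t \<le> M" shows "\<exists>T. \<forall>t\<ge>T. g t = g T"
proof -
  have fin: "finite (range g)" using assms(2) by (meson finite_atMost finite_subset image_subsetI atMost_iff)
  obtain T where T: "g T = Max (range g)" using Max_in[OF fin] by auto
  have "\<forall>t\<ge>T. g t = g T"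
  proof (intro allI impI)
    fix t assume "T \<le> t"
    hence "g T \<le> g t" using lift_Suc_mono_le[of g, OF assms(1)] by blast
    moreover have "g t \<le> g T" using T fin by simp
    ultimately show "g t = g T" by simp
  qed
  thus ?thesis by blast
qed

context conv begin

lemma upper: assumes "x \<in> B" "f x < c"
  shows "\<forall>\<^sub>F t in sequentially. ww R (map x [0..<Suc t]) \<le> c"
proof -
  define c' where "c' = (f x + c) / 2"
  have c': "f x < c'" "c' < c" using assms(2) unfolding c'_def by auto
  obtain i0 where i0: "\<And>t. \<not> R i0 c' (map x [0..<t])" using H2[OF assms(1) c'(1)] by blast
  have bnd: "lev R (qq j) (map x [0..<t]) \<le> i0" if "c < qq j" for j t
  proof (rule lev_le_i)
    show "\<not> R i0 (qq j) (map x [0..<t])" using i0[of t] mono_r[of i0 "qq j" _ c'] that c' by force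
  qed
  have ej: "\<forall>\<^sub>F t in sequentially. \<not> (c < qq j \<and> evt R j (map x [0..<Suc t]))" for j
  proof (cases "c < qq j")
    case False then show ?thesis by simp
  next
    case True
    obtain T where T: "\<And>t. t \<ge> T \<Longrightarrow> lev R (qq j) (map x [0..<t]) = lev R (qq j) (map x [0..<T])"
      using ev_const[of "\<lambda>t. lev R (qq j) (map x [0..<t])" i0] L_mono[OF assms(1)] bnd[OF True] by blast
    show ?thesis unfolding eventually_sequentially
    proof (intro exI allI impI)
      fix t assume "T \<le> t"
      hence "lev R (qq j) (map x [0..<Suc t]) = lev R (qq j) (map x [0..<t])" using T[of t] T[of "Suc t"] by simp
      thus "\<not> (c < qq j \<and> evt R j (map x [0..<Suc t]))" unfolding evt_def
        by (simp only: butlast_map_upt) simp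
    qed
  qed
  have big: "\<forall>\<^sub>F t in sequentially. \<not> (c < qq j \<and> evt R j (map x [0..<Suc t]))" if "i0 < j" for j
  proof -
    have "\<not> (c < qq j \<and> evt R j (map x [0..<Suc t]))" for t
      using bnd[of j "Suc t"] that unfolding evt_def by auto
    thus ?thesis by simp
  qed
  have "\<forall>\<^sub>F t in sequentially. \<forall>j\<in>{..i0}. \<not> (c < qq j \<and> evt R j (map x [0..<Suc t]))"
    by (rule eventually_ball_finite[OF finite_atMost]) (intro ballI ej)
  moreover have "\<forall>\<^sub>F t in sequentially. - real (Suc t) \<le> c"
    unfolding eventually_sequentially
  proof (rule exI[of _ "nat \<lceil>- c\<rceil>"], intro allI impI)
    fix n assume "nat \<lceil>- c\<rceil> \<le> n"
    hence "- c \<le> real n" by linarith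
    thus "- real (Suc n) \<le> c" by simp
  qed
  ultimately show ?thesis
  proof eventually_elim
    case (elim t)
    have "\<forall>j. \<not> (c < qq j \<and> evt R j (map x [0..<Suc t]))"
    proof (intro allI notI)
      fix j assume a: "c < qq j \<and> evt R j (map x [0..<Suc t])"
      hence "j \<le> lev R (qq j) (map x [0..<Suc t])" unfolding evt_def by blast
      also have "\<dots> \<le> i0" using bnd a by blast
      finally have "j \<in> {..i0}" by simp
      thus False using elim(1) a by blast
    qed
    then show ?case unfolding ww_def using elim(2) by (subst Max_le_iff) (auto simp: not_less)
  qed
qed

lemma result: "\<forall>x\<in>B. ereal (f x) = limsup (\<lambda>t. ereal (ww R (map x [0..<Suc t])))"
proof
  fix x assume x: "x \<in> B"
  let ?l = "limsup (\<lambda>t. ereal (ww R (map x [0..<Suc t])))"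
  have le: "?l \<le> ereal (f x)"
    unfolding Limsup_le_iff
  proof (intro allI impI)
    fix y assume y: "ereal (f x) < y"
    from ereal_dense2[OF y] obtain c where c0: "ereal (f x) < ereal c" "ereal c < y" by blast
    hence c: "f x < c" "ereal c < y" by auto
    show "\<forall>\<^sub>F t in sequentially. ereal (ww R (map x [0..<Suc t])) < y"
      using upper[OF x c(1)]
    proof eventually_elim
      case (elim t)
      have "ereal (ww R (map x [0..<Suc t])) \<le> ereal c" using elim by (simp del: upt_Suc)
      then show ?case using c(2) by (rule le_less_trans)
    qed
  qed
  have ge: "ereal (f x) \<le> ?l"
  proof (rule ccontr)
    assume "\<not> ereal (f x) \<le> ?l"
    hence "?l < ereal (f x)" by simp
    from ereal_dense2[OF this] obtain r where r0: "?l < ereal r" "ereal r < ereal (f x)" by blast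
    hence r: "?l < ereal r" "r < f x" by auto
    obtain j where j: "r < qq j" "qq j < f x" using qq_dense[OF r(2)] by blast
    have "?l < ereal (qq j)" proof -
      have "ereal r < ereal (qq j)" using j(1) by simp
      with r(1) show ?thesis by (rule less_trans)
    qed
    from Limsup_lessD[OF this] obtain T where T: "\<And>t. t \<ge> T \<Longrightarrow> ww R (map x [0..<Suc t]) < qq j"
      unfolding eventually_sequentially by auto
    obtain t where "t \<ge> T" "qq j \<le> ww R (map x [0..<Suc t])" using lower[OF x j(2)] by blast
    with T show False by fastforce
  qed
  show "ereal (f x) = ?l" using le ge by simp
qed

end

lemma take_map_upt: "m < t \<Longrightarrow> take (Suc m) (map x [0..<t]) = map x [0..<Suc m]"
  by (simp add: take_map)

lemma G1: assumes "ereal F = limsup (\<lambda>t. ereal (a t))" "r < F" shows "\<exists>m\<ge>i. r < a m"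
proof (rule ccontr)
  assume "\<not> (\<exists>m\<ge>i. r < a m)"
  hence "\<forall>\<^sub>F t in sequentially. ereal (a t) \<le> ereal r"
    unfolding eventually_sequentially by (auto simp: not_less)
  hence "limsup (\<lambda>t. ereal (a t)) \<le> ereal r" by (rule Limsup_bounded)
  hence "ereal F \<le> ereal r" using assms(1) by simp
  thus False using assms(2) by simp
qed

lemma G2: assumes "ereal F = limsup (\<lambda>t. ereal (a t))" "F < c" shows "\<exists>i. \<forall>m\<ge>i. a m < c"
proof -
  have "ereal F < ereal c" using assms(2) by simp
  hence "limsup (\<lambda>t. ereal (a t)) < ereal c" using assms(1) by simp
  from Limsup_lessD[OF this] show ?thesis unfolding eventually_sequentially by auto
qed

definition Rsum where "Rsum u v i r s \<longleftrightarrow> (\<exists>m m'. i \<le> m \<and> m < length s \<and> i \<le> m' \<and> m' < length s \<and>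
   r < u (take (Suc m) s) + v (take (Suc m') s))"
definition Rmin where "Rmin u v i r s \<longleftrightarrow> (\<exists>m m'. i \<le> m \<and> m < length s \<and> i \<le> m' \<and> m' < length s \<and>
   r < u (take (Suc m) s) \<and> r < v (take (Suc m') s))"
definition Rmax where "Rmax u v i r s \<longleftrightarrow> (\<exists>m. i \<le> m \<and> m < length s \<and>
   (r < u (take (Suc m) s) \<or> r < v (take (Suc m) s)))"

lemma Rsum_map: "Rsum u v i r (map x [0..<t]) \<longleftrightarrow> (\<exists>m m'. i \<le> m \<and> m < t \<and> i \<le> m' \<and> m' < t \<and>
   r < u (map x [0..<Suc m]) + v (map x [0..<Suc m']))"
  unfolding Rsum_def by (simp del: upt_Suc add: take_map_upt cong: conj_cong)
lemma Rmin_map: "Rmin u v i r (map x [0..<t]) \<longleftrightarrow> (\<exists>m m'. i \<le> m \<and> m < t \<and> i \<le> m' \<and> m' < t \<and>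
   r < u (map x [0..<Suc m]) \<and> r < v (map x [0..<Suc m']))"
  unfolding Rmin_def by (simp del: upt_Suc add: take_map_upt cong: conj_cong)
lemma Rmax_map: "Rmax u v i r (map x [0..<t]) \<longleftrightarrow> (\<exists>m. i \<le> m \<and> m < t \<and>
   (r < u (map x [0..<Suc m]) \<or> r < v (map x [0..<Suc m])))"
  unfolding Rmax_def by (simp del: upt_Suc add: take_map_upt cong: conj_cong)

locale two =
  fixes B and f g :: "(nat \<Rightarrow> 'a) \<Rightarrow> real" and u v :: "'a list \<Rightarrow> real"
  assumes fu: "\<And>x. x \<in> B \<Longrightarrow> ereal (f x) = limsup (\<lambda>t. ereal (u (map x [0..<Suc t])))"
  and gv: "\<And>x. x \<in> B \<Longrightarrow> ereal (g x) = limsup (\<lambda>t. ereal (v (map x [0..<Suc t])))"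
begin

lemma sum_conv: "conv (Rsum u v) B (\<lambda>x. f x + g x)"
proof
  show "Rsum u v i r' s" if "Rsum u v i r s" "r' \<le> r" for i r r' s
    using that unfolding Rsum_def by force
  show "Rsum u v i r (map x [0..<t'])" if "Rsum u v i r (map x [0..<t])" "t \<le> t'" for i r x t t'
    using that unfolding Rsum_map by (meson order_less_le_trans)
  show "\<exists>t. Rsum u v i r (map x [0..<t])" if x: "x \<in> B" and r: "r < f x + g x" for x i r
  proof -
    define d where "d = (f x + g x - r) / 2"
    obtain m where m: "m \<ge> i" "f x - d < u (map x [0..<Suc m])"
      using G1[OF fu[OF x], of "f x - d" i] r unfolding d_def by auto
    obtain m' where m': "m' \<ge> i" "g x - d < v (map x [0..<Suc m'])"
      using G1[OF gv[OF x], of "g x - d" i] r unfolding d_def by auto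
    have "r < u (map x [0..<Suc m]) + v (map x [0..<Suc m'])"
      using m(2) m'(2) unfolding d_def by argo
    hence "Rsum u v i r (map x [0..<Suc (max m m')])" unfolding Rsum_map
      using m(1) m'(1) by (meson less_Suc_eq_le max.cobounded1 max.cobounded2)
    thus ?thesis by blast
  qed
  show "\<exists>i. \<forall>t. \<not> Rsum u v i c (map x [0..<t])" if x: "x \<in> B" and c: "f x + g x < c" for x c
  proof -
    define d where "d = (c - f x - g x) / 2"
    obtain i1 where i1: "\<forall>m\<ge>i1. u (map x [0..<Suc m]) < f x + d"
      using G2[OF fu[OF x], of "f x + d"] c unfolding d_def by auto
    obtain i2 where i2: "\<forall>m\<ge>i2. v (map x [0..<Suc m]) < g x + d"
      using G2[OF gv[OF x], of "g x + d"] c unfolding d_def by auto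
    have "\<not> Rsum u v (max i1 i2) c (map x [0..<t])" for t
    proof
      assume "Rsum u v (max i1 i2) c (map x [0..<t])"
      then obtain m m' where "max i1 i2 \<le> m" "max i1 i2 \<le> m'"
        "c < u (map x [0..<Suc m]) + v (map x [0..<Suc m'])" unfolding Rsum_map by blast
      moreover have "u (map x [0..<Suc m]) < f x + d" "v (map x [0..<Suc m']) < g x + d"
        using i1 i2 calculation by auto
      ultimately show False unfolding d_def by argo
    qed
    thus ?thesis by blast
  qed
qed

lemma min_conv: "conv (Rmin u v) B (\<lambda>x. min (f x) (g x))"
proof
  show "Rmin u v i r' s" if "Rmin u v i r s" "r' \<le> r" for i r r' s
    using that unfolding Rmin_def by force
  show "Rmin u v i r (map x [0..<t'])" if "Rmin u v i r (map x [0..<t])" "t \<le> t'" for i r x t t'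
    using that unfolding Rmin_map by (meson order_less_le_trans)
  show "\<exists>t. Rmin u v i r (map x [0..<t])" if x: "x \<in> B" and r: "r < min (f x) (g x)" for x i r
  proof -
    obtain m where m: "m \<ge> i" "r < u (map x [0..<Suc m])"
      using G1[OF fu[OF x], of r i] r by auto
    obtain m' where m': "m' \<ge> i" "r < v (map x [0..<Suc m'])"
      using G1[OF gv[OF x], of r i] r by auto
    have "Rmin u v i r (map x [0..<Suc (max m m')])" unfolding Rmin_map
      using m m' by (meson less_Suc_eq_le max.cobounded1 max.cobounded2)
    thus ?thesis by blast
  qed
  show "\<exists>i. \<forall>t. \<not> Rmin u v i c (map x [0..<t])" if x: "x \<in> B" and c: "min (f x) (g x) < c" for x c
  proof (cases "f x < c")
    case True
    obtain i1 where i1: "\<forall>m\<ge>i1. u (map x [0..<Suc m]) < c"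
      using G2[OF fu[OF x] True] by auto
    have "\<not> Rmin u v i1 c (map x [0..<t])" for t
      using i1 unfolding Rmin_map by fastforce
    thus ?thesis by blast
  next
    case False
    hence gc: "g x < c" using c by simp
    obtain i1 where i1: "\<forall>m\<ge>i1. v (map x [0..<Suc m]) < c"
      using G2[OF gv[OF x] gc] by auto
    have "\<not> Rmin u v i1 c (map x [0..<t])" for t
      using i1 unfolding Rmin_map by fastforce
    thus ?thesis by blast
  qed
qed

lemma max_conv: "conv (Rmax u v) B (\<lambda>x. max (f x) (g x))"
proof
  show "Rmax u v i r' s" if "Rmax u v i r s" "r' \<le> r" for i r r' s
    using that unfolding Rmax_def by force
  show "Rmax u v i r (map x [0..<t'])" if "Rmax u v i r (map x [0..<t])" "t \<le> t'" for i r x t t'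
    using that unfolding Rmax_map by (meson order_less_le_trans)
  show "\<exists>t. Rmax u v i r (map x [0..<t])" if x: "x \<in> B" and r: "r < max (f x) (g x)" for x i r
  proof (cases "r < f x")
    case True
    obtain m where m: "m \<ge> i" "r < u (map x [0..<Suc m])"
      using G1[OF fu[OF x] True, of i] by auto
    have "Rmax u v i r (map x [0..<Suc m])" unfolding Rmax_map using m by auto
    thus ?thesis by blast
  next
    case False
    hence "r < g x" using r by simp
    then obtain m where m: "m \<ge> i" "r < v (map x [0..<Suc m])"
      using G1[OF gv[OF x], of r i] by auto
    have "Rmax u v i r (map x [0..<Suc m])" unfolding Rmax_map using m by auto
    thus ?thesis by blast
  qed
  show "\<exists>i. \<forall>t. \<not> Rmax u v i c (map x [0..<t])" if x: "x \<in> B" and c: "max (f x) (g x) < c" for x c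
  proof -
    obtain i1 where i1: "\<forall>m\<ge>i1. u (map x [0..<Suc m]) < c"
      using G2[OF fu[OF x]] c by auto
    obtain i2 where i2: "\<forall>m\<ge>i2. v (map x [0..<Suc m]) < c"
      using G2[OF gv[OF x]] c by auto
    have "\<not> Rmax u v (max i1 i2) c (map x [0..<t])" for t
      using i1 i2 unfolding Rmax_map by fastforce
    thus ?thesis by blast
  qed
qed

end

theorem mainTheorem2:
  fixes A :: "'a set" and T :: "'a list set" and f g :: "(nat \<Rightarrow> 'a) \<Rightarrow> real"
  assumes "A \<noteq> {}" and "countable A" and "pruned_tree A T"
    and "limsup_function T f" and "limsup_function T g"
  shows "limsup_function T (\<lambda>x. f x + g x)
     \<and> limsup_function T (\<lambda>x. min (f x) (g x))
     \<and> limsup_function T (\<lambda>x. max (f x) (g x))"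
proof -
  obtain u where u: "\<forall>x\<in>branches T. ereal (f x) = limsup (\<lambda>t. ereal (u (map x [0..<Suc t])))"
    using assms(4) unfolding limsup_function_def by blast
  obtain v where v: "\<forall>x\<in>branches T. ereal (g x) = limsup (\<lambda>t. ereal (v (map x [0..<Suc t])))"
    using assms(5) unfolding limsup_function_def by blast
  interpret two "branches T" f g u v
    by unfold_locales (use u v in auto)
  have 1: "limsup_function T (\<lambda>x. f x + g x)"
    unfolding limsup_function_def using conv.result[OF sum_conv] by blast
  have 2: "limsup_function T (\<lambda>x. min (f x) (g x))"
    unfolding limsup_function_def using conv.result[OF min_conv] by blast
  have 3: "limsup_function T (\<lambda>x. max (f x) (g x))"
    unfolding limsup_function_def using conv.result[OF max_conv] by blast
  show ?thesis using 1 2 3 by blast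
qed

end
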